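(* (ZFC.) Let $F\subseteq\mathsf{Agg}^{\sigma}$ be a set with $|F|\le\mathfrak{c}$. Then the $\sigma$-clone generated by $F$ has cardinality at most $\mathfrak{c}$.
   Context: $\mathfrak{c}=2^{\aleph_0}$; the axiom of choice is assumed. $\omega$ is the first infinite ordinal. For an arity $\alpha$ with $0<\alpha\le\omega$ (a positive integer $n=\{0,\dots,n-1\}$ or $\omega$), an $\alpha$-ary aggregation function is a function $f\colon[0,1]^{\alpha}\to[0,1]$ nondecreasing in each coordinate with $f$ equal to $0$ at the all-zero vector and $1$ at the all-one vector. $\mathsf{Agg}$ is the set of aggregation functions of finite arity, $\mathsf{Agg}^{\omega}$ the set of those of arity $\omega$, and $\mathsf{Agg}^{\sigma}=\mathsf{Agg}\cup\mathsf{Agg}^{\omega}$. For an $\alpha$-ary $f$ and $\beta$-ary functions $g_i$, $i<\alpha$ ($0<\alpha,\beta\le\omega$), the composition $f\circ(g_i:i<\alpha)$ is the $\beta$-ary function $\mathbf{x}\mapsto f((g_i(\mathbf{x}))_{i<\alpha})$. A $\sigma$-clone is a set of functions on $[0,1]$ of arities $\alpha$ with $0<\alpha\le\omega$ that contains all projections $p^{\alpha}_i((x_j)_{j<\alpha})=x_i$ ($i<\alpha$) and is closed under such compositions; the $\sigma$-clone generated by $F$ is the smallest $\sigma$-clone containing $F$. *)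

theory Defs
  imports Main "HOL-Library.FuncSet" "HOL-Library.Equipollence" "HOL-Library.Extended_Nat"
    "HOL-Library.Cardinality" Complex_Main
begin

text \<open>An arity is an element alpha of enat with 0 < alpha; the value infinity stands for omega.
  A point of [0,1]^alpha is represented as a sequence nat => real whose coordinates
  i < alpha lie in [0,1] and whose remaining coordinates are 0 (canonical padding).\<close>

definition cube :: "enat \<Rightarrow> (nat \<Rightarrow> real) set" where
  "cube a = {x. (\<forall>i. enat i < a \<longrightarrow> x i \<in> {0..1}) \<and> (\<forall>i. \<not> enat i < a \<longrightarrow> x i = 0)}"

type_synonym opn = "enat \<times> ((nat \<Rightarrow> real) \<Rightarrow> real)"

definition is_fun :: "opn \<Rightarrow> bool" where
  "is_fun p \<longleftrightarrow> 0 < fst p \<and> snd p \<in> extensional (cube (fst p))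
      \<and> snd p ` cube (fst p) \<subseteq> {0..1}"

definition zero_vec :: "enat \<Rightarrow> nat \<Rightarrow> real" where
  "zero_vec a = (\<lambda>i. 0)"

definition one_vec :: "enat \<Rightarrow> nat \<Rightarrow> real" where
  "one_vec a = (\<lambda>i. if enat i < a then 1 else 0)"

definition is_agg :: "opn \<Rightarrow> bool" where
  "is_agg p \<longleftrightarrow> is_fun p \<and>
     (\<forall>x\<in>cube (fst p). \<forall>i t. enat i < fst p \<longrightarrow> t \<in> {0..1} \<longrightarrow> x i \<le> t
        \<longrightarrow> snd p x \<le> snd p (x(i := t))) \<and>
     snd p (zero_vec (fst p)) = 0 \<and> snd p (one_vec (fst p)) = 1"

definition AggSigma :: "opn set" where
  "AggSigma = {p. is_agg p}"

definition proj :: "enat \<Rightarrow> nat \<Rightarrow> opn" where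
  "proj a i = (a, restrict (\<lambda>x. x i) (cube a))"

definition compose :: "opn \<Rightarrow> enat \<Rightarrow> (nat \<Rightarrow> (nat \<Rightarrow> real) \<Rightarrow> real) \<Rightarrow> opn" where
  "compose p b g = (b, restrict (\<lambda>x. snd p (\<lambda>i. if enat i < fst p then g i x else 0)) (cube b))"

definition sigma_clone :: "opn set \<Rightarrow> bool" where
  "sigma_clone C \<longleftrightarrow>
     (\<forall>p\<in>C. is_fun p) \<and>
     (\<forall>a i. 0 < a \<longrightarrow> enat i < a \<longrightarrow> proj a i \<in> C) \<and>
     (\<forall>p\<in>C. \<forall>b g. 0 < b \<longrightarrow> (\<forall>i. enat i < fst p \<longrightarrow> (b, g i) \<in> C)
         \<longrightarrow> compose p b g \<in> C)"

definition generated_sigma_clone :: "opn set \<Rightarrow> opn set" where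
  "generated_sigma_clone F = \<Inter> {C. sigma_clone C \<and> F \<subseteq> C}"

end

theory Submission
  imports Defs "HOL-Analysis.Analysis" "HOL-Library.Countable"
begin

definition mk :: "enat \<Rightarrow> (nat list \<Rightarrow> nat \<times> nat set) \<Rightarrow> (nat \<Rightarrow> nat list \<Rightarrow> nat \<times> nat set)
   \<Rightarrow> nat list \<Rightarrow> nat \<times> nat set" where
  "mk b t0 ts = (\<lambda>xs. case xs of [] \<Rightarrow> (2, {to_nat b}) | 0 # ys \<Rightarrow> t0 ys | Suc i # ys \<Rightarrow> ts i ys)"

lemma mk_inj:
  assumes "mk b t0 ts = mk b' t0' ts'"
  shows "b = b' \<and> t0 = t0' \<and> ts = ts'"
proof -
  have "mk b t0 ts [] = mk b' t0' ts' []" using assms by simp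
  hence 1: "b = b'" by (simp add: mk_def)
  have "\<And>ys. mk b t0 ts (0#ys) = mk b' t0' ts' (0#ys)" using assms by simp
  hence 2: "t0 = t0'" by (auto simp: mk_def)
  have "\<And>i ys. mk b t0 ts (Suc i#ys) = mk b' t0' ts' (Suc i#ys)" using assms by simp
  hence 3: "ts = ts'" by (auto simp: mk_def)
  show ?thesis using 1 2 3 by simp
qed

lemma mk_root: "fst (mk b t0 ts []) = 2" by (simp add: mk_def)

inductive den :: "opn set \<Rightarrow> (opn \<Rightarrow> nat set) \<Rightarrow> (nat list \<Rightarrow> nat \<times> nat set) \<Rightarrow> opn \<Rightarrow> bool"
  for F e where
  gen: "p \<in> F \<Longrightarrow> den F e (\<lambda>_. (0, e p)) p"
| prj: "0 < a \<Longrightarrow> enat i < a \<Longrightarrow> den F e (\<lambda>_. (1, {to_nat (a, i)})) (proj a i)"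
| cmp: "den F e t0 p \<Longrightarrow> 0 < b \<Longrightarrow> (\<forall>i. enat i < fst p \<longrightarrow> den F e (ts i) (b, g i))
     \<Longrightarrow> den F e (mk b t0 ts) (compose p b g)"

lemma den_fun:
  assumes "inj_on e F"
  shows "den F e t p \<Longrightarrow> den F e t q \<Longrightarrow> p = q"
proof (induction t p arbitrary: q rule: den.induct)
  case (gen p)
  from gen.prems show ?case
  proof cases
    case gen then show ?thesis using assms gen.hyps by (metis inj_onD prod.inject)
  next
    case prj then show ?thesis by (metis prod.inject zero_neq_one)
  next
    case cmp then show ?thesis by (auto dest!: fun_cong[where x="[]"] simp: mk_def)
  qed
next
  case (prj a i)
  from prj.prems show ?case
  proof cases
    case gen then show ?thesis by (metis prod.inject zero_neq_one)
  next
    case prj then show ?thesis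
      by (metis prod.inject singleton_inject to_nat_split)
  next
    case cmp then show ?thesis by (auto dest!: fun_cong[where x="[]"] simp: mk_def)
  qed
next
  case (cmp t0 p b ts g)
  from cmp.prems show ?case
  proof cases
    case gen then show ?thesis by (auto dest!: fun_cong[where x="[]"] simp: mk_def)
  next
    case prj then show ?thesis by (auto dest!: fun_cong[where x="[]"] simp: mk_def)
  next
    case (cmp t0' p' b' ts' g')
    from cmp(1) mk_inj have e: "b = b'" "t0 = t0'" "ts = ts'" by blast+
    have pp: "p = p'" using cmp.IH(1) cmp e by blast
    have gg: "\<And>i. enat i < fst p \<Longrightarrow> g i = g' i"
    proof -
      fix i assume i: "enat i < fst p"
      have "den F e (ts i) (b, g' i)" using cmp e pp i by auto
      hence "(b, g i) = (b, g' i)" using cmp.IH(2) i by blast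
      thus "g i = g' i" by simp
    qed
    have "q = compose p' b' g'" using cmp by blast
    then show ?thesis unfolding compose_def using pp e gg
      by (auto intro!: restrict_ext arg_cong[where f="snd p'"])
  qed
qed


lemma den_is_fun:
  assumes "F \<subseteq> AggSigma"
  shows "den F e t p \<Longrightarrow> is_fun p"
proof (induction t p rule: den.induct)
  case (gen p) then show ?case using assms by (auto simp: AggSigma_def is_agg_def)
next
  case (prj a i) then show ?case
    by (auto simp: is_fun_def proj_def cube_def)
next
  case (cmp t0 p b ts g)
  have "snd (compose p b g) ` cube b \<subseteq> {0..1}"
  proof
    fix y assume "y \<in> snd (compose p b g) ` cube b"
    then obtain x where x: "x \<in> cube b" and y: "y = snd p (\<lambda>i. if enat i < fst p then g i x else 0)"
      by (auto simp: compose_def)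
    have "(\<lambda>i. if enat i < fst p then g i x else 0) \<in> cube (fst p)"
    proof -
      have "\<And>i. enat i < fst p \<Longrightarrow> g i x \<in> {0..1}"
      proof -
        fix i assume "enat i < fst p"
        hence "is_fun (b, g i)" using cmp.IH(2) by blast
        thus "g i x \<in> {0..1}" using x by (auto simp: is_fun_def)
      qed
      thus ?thesis by (auto simp: cube_def)
    qed
    thus "y \<in> {0..1}" using cmp.IH(1) y by (auto simp: is_fun_def)
  qed
  then show ?case using cmp.hyps(2) by (auto simp: is_fun_def compose_def)
qed

definition enc :: "(nat list \<Rightarrow> nat \<times> nat set) \<Rightarrow> nat set" where
  "enc t = {to_nat (xs, Inl (fst (t xs)) :: nat + nat) | xs. True}
          \<union> {to_nat (xs, Inr n :: nat + nat) | xs n. n \<in> snd (t xs)}"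

lemma enc_mem1: "to_nat (xs, Inl k :: nat + nat) \<in> enc t \<longleftrightarrow> k = fst (t xs)"
  unfolding enc_def by (simp add: to_nat_split)

lemma enc_mem2: "to_nat (xs, Inr n :: nat + nat) \<in> enc t \<longleftrightarrow> n \<in> snd (t xs)"
  unfolding enc_def by (simp add: to_nat_split)

lemma enc_inj: "inj enc"
proof (rule injI)
  fix t t' assume h: "enc t = enc t'"
  show "t = t'"
  proof
    fix xs
    have "fst (t xs) = fst (t' xs)" using enc_mem1[of xs "fst (t xs)" t] enc_mem1[of xs "fst (t xs)" t'] h by simp
    moreover have "snd (t xs) = snd (t' xs)" using enc_mem2[of xs _ t] enc_mem2[of xs _ t'] h by blast
    ultimately show "t xs = t' xs" by (simp add: prod_eq_iff)
  qed
qed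

theorem theorem2:
  fixes F :: "opn set"
  assumes "F \<subseteq> AggSigma"
    and "F \<lesssim> (UNIV :: real set)"
  shows "generated_sigma_clone F \<lesssim> (UNIV :: real set)"
proof -
  have "F \<lesssim> (UNIV :: nat set set)"
    by (rule lepoll_trans[OF assms(2) eqpoll_imp_lepoll[OF eqpoll_sym[OF nat_sets_eqpoll_reals]]])
  then obtain e :: "opn \<Rightarrow> nat set" where e: "inj_on e F" unfolding lepoll_def by blast
  define C where "C = {p. \<exists>t. den F e t p}"
  have "sigma_clone C"
    unfolding sigma_clone_def
  proof (intro conjI ballI allI impI)
    fix p assume "p \<in> C" then obtain t where "den F e t p" unfolding C_def by auto
    thus "is_fun p" by (rule den_is_fun[OF assms(1)])
  next
    fix a i assume "0 < a" "enat i < a" hence "den F e (\<lambda>_. (1, {to_nat (a, i)})) (proj a i)" by (rule den.prj)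
    thus "proj a i \<in> C" unfolding C_def by blast
  next
    fix p b g assume p: "p \<in> C" and b: "0 < b" and g: "\<forall>i. enat i < fst p \<longrightarrow> (b, g i) \<in> C"
    obtain t0 where t0: "den F e t0 p" using p unfolding C_def by auto
    have "\<forall>i. \<exists>t. enat i < fst p \<longrightarrow> den F e t (b, g i)" using g unfolding C_def by auto
    then obtain ts where "\<forall>i. enat i < fst p \<longrightarrow> den F e (ts i) (b, g i)" by metis
    then have "den F e (mk b t0 ts) (compose p b g)" by (rule den.cmp[OF t0 b])
    then show "compose p b g \<in> C" unfolding C_def by auto
  qed
  moreover have "F \<subseteq> C" unfolding C_def using den.gen[of _ F e] by blast
  ultimately have sub: "generated_sigma_clone F \<subseteq> C"
    unfolding generated_sigma_clone_def by (simp add: Inter_lower)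
  define f where "f p = (SOME t. den F e t p)" for p
  have fden: "den F e (f p) p" if "p \<in> C" for p
    using that unfolding C_def f_def by (metis (mono_tags, lifting) mem_Collect_eq someI)
  have "inj_on f C"
  proof (rule inj_onI)
    fix p q assume "p \<in> C" "q \<in> C" "f p = f q"
    then have "den F e (f p) q" using fden by simp
    thus "p = q" using fden[OF \<open>p \<in> C\<close>] den_fun[OF e] by blast
  qed
  hence "inj_on (enc \<circ> f) C" using enc_inj by (simp add: comp_inj_on inj_on_subset)
  hence "C \<lesssim> (UNIV :: nat set set)" unfolding lepoll_def by (intro exI[of _ "enc \<circ> f"]) simp
  hence "C \<lesssim> (UNIV :: real set)"
    by (rule lepoll_trans[OF _ eqpoll_imp_lepoll[OF nat_sets_eqpoll_reals]])
  thus ?thesis by (rule lepoll_trans[OF subset_imp_lepoll[OF sub]])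
qed

end
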